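(* Let $G<\operatorname{Aut}(T)$ be the group generated by the automorphisms $a,b,c$ of the $6$-ary rooted tree $T=\{1,\dots,6\}^*$ defined by $a=\langle\!\langle b^{-1},1,b,c^{-1},1,c\rangle\!\rangle(13)(25)(46)$, $b=\langle\!\langle b,b^{-1},1,c,c^{-1},1\rangle\!\rangle(2356)$, $c=(123)(456)$. Then for every $n\in\mathbb{N}$, $G$ contains a subgroup isomorphic to $\mathbb{Z}^n$.
   Context: $T$ is the tree of finite words over $X=\{1,\dots,6\}$; automorphisms act on the right. The wreath recursion $g=\langle\!\langle g_1,\dots,g_6\rangle\!\rangle\sigma$ means $(xv)^g=x^\sigma v^{g_x}$ for $x\in X$, $v\in X^*$. (This $G$ is $\operatorname{IMG}(f_1)$ for $f_1(z)=\frac{2(z^2-3/4)^3}{z^2(z^2-9/8)^2}-1$.) *)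

theory Defs
  imports "HOL-Algebra.Algebra"
begin

datatype letter = L1 | L2 | L3 | L4 | L5 | L6

type_synonym word = "letter list"

fun sigma_a :: "letter \<Rightarrow> letter" where
  "sigma_a L1 = L3" | "sigma_a L3 = L1" | "sigma_a L2 = L5" | "sigma_a L5 = L2"
| "sigma_a L4 = L6" | "sigma_a L6 = L4"

fun sigma_b :: "letter \<Rightarrow> letter" where
  "sigma_b L1 = L1" | "sigma_b L2 = L3" | "sigma_b L3 = L5" | "sigma_b L5 = L6"
| "sigma_b L6 = L2" | "sigma_b L4 = L4"

fun sigma_b_inv :: "letter \<Rightarrow> letter" where
  "sigma_b_inv L1 = L1" | "sigma_b_inv L3 = L2" | "sigma_b_inv L5 = L3" | "sigma_b_inv L6 = L5"
| "sigma_b_inv L2 = L6" | "sigma_b_inv L4 = L4"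

fun sigma_c :: "letter \<Rightarrow> letter" where
  "sigma_c L1 = L2" | "sigma_c L2 = L3" | "sigma_c L3 = L1"
| "sigma_c L4 = L5" | "sigma_c L5 = L6" | "sigma_c L6 = L4"

fun sigma_c_inv :: "letter \<Rightarrow> letter" where
  "sigma_c_inv L2 = L1" | "sigma_c_inv L3 = L2" | "sigma_c_inv L1 = L3"
| "sigma_c_inv L5 = L4" | "sigma_c_inv L6 = L5" | "sigma_c_inv L4 = L6"

definition aut_c :: "word \<Rightarrow> word" where
  "aut_c w = (case w of [] \<Rightarrow> [] | x # v \<Rightarrow> sigma_c x # v)"

definition aut_c_inv :: "word \<Rightarrow> word" where
  "aut_c_inv w = (case w of [] \<Rightarrow> [] | x # v \<Rightarrow> sigma_c_inv x # v)"

text \<open>Wreath recursion with right action: (x v)^g = x^sigma v^(g_x).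
  b = <<b, b^-1, 1, c, c^-1, 1>> (2356);
  b^-1 acts by (y w)^(b^-1) = x w^((b_x)^-1) where x = y^(sigma_b^-1).\<close>
fun aut_b :: "word \<Rightarrow> word" and aut_b_inv :: "word \<Rightarrow> word" where
  "aut_b [] = []"
| "aut_b (x # v) = sigma_b x # (case x of
      L1 \<Rightarrow> aut_b v | L2 \<Rightarrow> aut_b_inv v | L3 \<Rightarrow> v
    | L4 \<Rightarrow> aut_c v | L5 \<Rightarrow> aut_c_inv v | L6 \<Rightarrow> v)"
| "aut_b_inv [] = []"
| "aut_b_inv (y # w) = sigma_b_inv y # (case sigma_b_inv y of
      L1 \<Rightarrow> aut_b_inv w | L2 \<Rightarrow> aut_b w | L3 \<Rightarrow> w
    | L4 \<Rightarrow> aut_c_inv w | L5 \<Rightarrow> aut_c w | L6 \<Rightarrow> w)"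

fun aut_a :: "word \<Rightarrow> word" where
  "aut_a [] = []"
| "aut_a (x # v) = sigma_a x # (case x of
      L1 \<Rightarrow> aut_b_inv v | L2 \<Rightarrow> v | L3 \<Rightarrow> aut_b v
    | L4 \<Rightarrow> aut_c_inv v | L5 \<Rightarrow> v | L6 \<Rightarrow> aut_c v)"

text \<open>The group of all bijections of the vertex set of T, with the right-action
  product convention: v^(gh) = (v^g)^h, i.e. g \<otimes> h = h \<circ> g.  Aut(T) is a
  subgroup of it, and G is generated inside it.\<close>
definition word_perm_group :: "(word \<Rightarrow> word) monoid" where
  "word_perm_group = \<lparr>carrier = {f. bij f}, monoid.mult = (\<lambda>g h. h \<circ> g), one = id\<rparr>"

definition G_group_carrier :: "(word \<Rightarrow> word) set" where
  "G_group_carrier = generate word_perm_group {aut_a, aut_b, aut_c}"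

definition Zn_group :: "nat \<Rightarrow> (nat \<Rightarrow> int) monoid" where
  "Zn_group n = product_group {..<n} (\<lambda>_. integer_group)"

end

theory Submission
  imports Defs
begin


datatype gen = Gb | Gbi | Gc | Gci

fun gf :: "gen \<Rightarrow> word \<Rightarrow> word" where
  "gf Gb = aut_b" | "gf Gbi = aut_b_inv" | "gf Gc = aut_c" | "gf Gci = aut_c_inv"

fun wact :: "gen list \<Rightarrow> word \<Rightarrow> word" where
  "wact [] v = v" | "wact (g#gs) v = wact gs (gf g v)"

fun gstep :: "gen \<Rightarrow> letter \<Rightarrow> letter \<times> gen list" where
  "gstep Gb x = (sigma_b x, case x of L1 \<Rightarrow> [Gb] | L2 \<Rightarrow> [Gbi] | L3 \<Rightarrow> [] | L4 \<Rightarrow> [Gc] | L5 \<Rightarrow> [Gci] | L6 \<Rightarrow> [])"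
| "gstep Gbi y = (sigma_b_inv y, case sigma_b_inv y of L1 \<Rightarrow> [Gbi] | L2 \<Rightarrow> [Gb] | L3 \<Rightarrow> [] | L4 \<Rightarrow> [Gci] | L5 \<Rightarrow> [Gc] | L6 \<Rightarrow> [])"
| "gstep Gc x = (sigma_c x, [])"
| "gstep Gci x = (sigma_c_inv x, [])"

lemma gf_Cons: "gf g (x#v) = fst (gstep g x) # wact (snd (gstep g x)) v"
  by (cases g; cases x) (simp_all add: aut_c_def aut_c_inv_def)

lemma gf_Nil: "gf g [] = []"
  by (cases g) (simp_all add: aut_c_def aut_c_inv_def)

fun wstep :: "gen list \<Rightarrow> letter \<Rightarrow> letter \<times> gen list" where
  "wstep [] x = (x, [])"
| "wstep (g#gs) x = (let (y,s) = gstep g x; (z,t) = wstep gs y in (z, s @ t))"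

lemma wact_append: "wact (u @ w) v = wact w (wact u v)"
  by (induction u arbitrary: v) auto

lemma wact_Nil [simp]: "wact w [] = []"
  by (induction w) (auto simp: gf_Nil)

lemma wact_Cons: "wact w (x#v) = fst (wstep w x) # wact (snd (wstep w x)) v"
proof (induction w arbitrary: x v)
  case Nil then show ?case by simp
next
  case (Cons g gs)
  show ?case
    by (simp add: gf_Cons Cons split_def wact_append Let_def)
qed

lemma sigma_c_inv_c [simp]: "sigma_c_inv (sigma_c x) = x" by (cases x) auto
lemma sigma_c_c_inv [simp]: "sigma_c (sigma_c_inv x) = x" by (cases x) auto
lemma sigma_b_inv_b [simp]: "sigma_b_inv (sigma_b x) = x" by (cases x) auto
lemma sigma_b_b_inv [simp]: "sigma_b (sigma_b_inv x) = x" by (cases x) auto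

lemma aut_c_inverses [simp]: "aut_c_inv (aut_c v) = v" "aut_c (aut_c_inv v) = v"
  by (auto simp: aut_c_def aut_c_inv_def split: list.splits)

lemma aut_c_cube: "aut_c (aut_c v) = aut_c_inv v" "aut_c_inv (aut_c_inv v) = aut_c v"
  by (cases v; auto simp: aut_c_def aut_c_inv_def split: list.splits letter.splits; case_tac a; auto)+

lemma aut_b_inverses: "aut_b_inv (aut_b v) = v \<and> aut_b (aut_b_inv v) = v"
proof (induction v)
  case Nil then show ?case by simp
next
  case (Cons x v)
  then show ?case
    by (cases x) (simp_all add: aut_c_def aut_c_inv_def split: list.splits letter.splits)
qed

fun push :: "gen \<Rightarrow> gen list \<Rightarrow> gen list" where
  "push g [] = [g]"
| "push Gb (Gbi#t) = t" | "push Gbi (Gb#t) = t" | "push Gc (Gci#t) = t" | "push Gci (Gc#t) = t"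
| "push Gc (Gc#t) = push Gci t" | "push Gci (Gci#t) = push Gc t"
| "push g (h#t) = g#h#t"

fun red :: "gen list \<Rightarrow> gen list" where
  "red [] = []" | "red (g#gs) = push g (red gs)"

lemma wact_push: "wact (push g t) v = wact (g#t) v"
  by (induction g t arbitrary: v rule: push.induct)
     (simp_all add: aut_b_inverses aut_c_cube)

lemma wact_red: "wact (red w) v = wact w v"
  by (induction w arbitrary: v) (simp_all add: wact_push)

definition letters :: "letter list" where "letters = [L1,L2,L3,L4,L5,L6]"

lemma letters_all: "x \<in> set letters" by (cases x) (auto simp: letters_def)

definition okpair :: "(gen list \<times> gen list) list \<Rightarrow> gen list \<times> gen list \<Rightarrow> bool" where
  "okpair R p = list_all (\<lambda>x. fst (wstep (fst p) x) = fst (wstep (snd p) x) \<and>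
      (red (snd (wstep (fst p) x)), red (snd (wstep (snd p) x))) \<in> set R) letters"

lemma bisim_sound:
  assumes "list_all (okpair R) R" "(u,w) \<in> set R"
  shows "wact u v = wact w v"
  using assms(2)
proof (induction v arbitrary: u w)
  case Nil then show ?case by simp
next
  case (Cons x v)
  have "okpair R (u,w)" using assms(1) Cons.prems by (simp add: list_all_iff)
  then have "fst (wstep u x) = fst (wstep w x)"
    and m: "(red (snd (wstep u x)), red (snd (wstep w x))) \<in> set R"
    using letters_all[of x] by (auto simp: okpair_def list_all_iff)
  moreover have "wact (snd (wstep u x)) v = wact (snd (wstep w x)) v"
    using Cons.IH[OF m] by (simp only: wact_red)
  ultimately show ?case by (simp only: wact_Cons)
qed




abbreviation P where "P \<equiv> word_perm_group"

lemma P_carrier [simp]: "carrier P = {f. bij f}" by (simp add: word_perm_group_def)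
lemma P_mult [simp]: "g \<otimes>\<^bsub>P\<^esub> h = h \<circ> g" by (simp add: word_perm_group_def)
lemma P_one [simp]: "\<one>\<^bsub>P\<^esub> = id" by (simp add: word_perm_group_def)

lemma P_group: "group P"
proof (rule groupI)
  fix x y z assume "x \<in> carrier P" "y \<in> carrier P" "z \<in> carrier P"
  then show "x \<otimes>\<^bsub>P\<^esub> y \<otimes>\<^bsub>P\<^esub> z = x \<otimes>\<^bsub>P\<^esub> (y \<otimes>\<^bsub>P\<^esub> z)" by (simp add: comp_assoc)
next
  fix x y assume "x \<in> carrier P" "y \<in> carrier P"
  then show "x \<otimes>\<^bsub>P\<^esub> y \<in> carrier P" by (auto intro: bij_comp)
next
  show "\<one>\<^bsub>P\<^esub> \<in> carrier P" by simp
next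
  fix x assume "x \<in> carrier P" then show "\<one>\<^bsub>P\<^esub> \<otimes>\<^bsub>P\<^esub> x = x" by simp
next
  fix x assume "x \<in> carrier P"
  then have b: "bij x" by simp
  have "x \<circ> inv_into UNIV x = id" using b bij_is_surj surj_iff by blast
  then show "\<exists>y\<in>carrier P. y \<otimes>\<^bsub>P\<^esub> x = \<one>\<^bsub>P\<^esub>"
    using b by (intro bexI[of _ "inv_into UNIV x"]) (auto simp: bij_imp_bij_inv)
qed

interpretation P: group P by (rule P_group)

lemma P_inv: assumes "bij f" shows "inv\<^bsub>P\<^esub> f = inv_into UNIV f"
proof -
  have "f \<circ> inv_into UNIV f = id" using assms bij_is_surj surj_iff by blast
  then show ?thesis by (intro P.inv_equality) (auto simp: bij_imp_bij_inv assms)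
qed

lemma P_pow: "f [^]\<^bsub>P\<^esub> (n::nat) = f ^^ n"
  by (induction n) (simp_all add: funpow_Suc_right flip: funpow.simps)

lemma aut_a_invol: "aut_a (aut_a v) = v"
  by (cases v; simp; case_tac a) (simp_all add: aut_b_inverses)

lemma bij_aut_a: "bij aut_a" by (rule o_bij[of aut_a]) (simp_all add: fun_eq_iff aut_a_invol)

lemma bij_gf: "bij (gf g)"
proof (cases g)
  case Gb then show ?thesis by simp (rule o_bij[of aut_b_inv]; simp add: fun_eq_iff aut_b_inverses)
next
  case Gbi then show ?thesis by simp (rule o_bij[of aut_b]; simp add: fun_eq_iff aut_b_inverses)
next
  case Gc then show ?thesis by simp (rule o_bij[of aut_c_inv]; simp add: fun_eq_iff)
next
  case Gci then show ?thesis by simp (rule o_bij[of aut_c]; simp add: fun_eq_iff)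
qed

lemma bij_wact: "bij (wact w)"
proof (induction w)
  case Nil then show ?case by (simp add: id_def[symmetric])
next
  case (Cons g gs)
  have "wact (g#gs) = wact gs \<circ> gf g" by (rule ext) simp
  then show ?case using Cons bij_gf[of g] by (simp only: bij_comp)
qed

lemma G_subgroup: "subgroup G_group_carrier P"
  unfolding G_group_carrier_def
  by (rule P.generate_is_subgroup)
     (auto simp: bij_aut_a bij_gf[of Gb, simplified] bij_gf[of Gc, simplified])

interpretation Gs: subgroup G_group_carrier P by (rule G_subgroup)

lemma gens_in_G: "aut_b \<in> G_group_carrier" "aut_c \<in> G_group_carrier"
  unfolding G_group_carrier_def by (auto intro: generate.incl)

lemma gf_in_G: "gf g \<in> G_group_carrier"
proof (cases g)
  case Gbi
  have "aut_b_inv = inv\<^bsub>P\<^esub> aut_b"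
    using P_inv[OF bij_gf[of Gb]] by (metis bij_gf gf.simps(1) inv_equality aut_b_inverses)
  then show ?thesis using Gbi gens_in_G(1) Gs.m_inv_closed[of aut_b] by simp
next
  case Gci
  have "aut_c_inv = inv\<^bsub>P\<^esub> aut_c"
    using P_inv[OF bij_gf[of Gc]] by (metis bij_gf gf.simps(3) inv_equality aut_c_inverses)
  then show ?thesis using Gci gens_in_G(2) Gs.m_inv_closed[of aut_c] by simp
qed (use gens_in_G in auto)

lemma wact_in_G: "wact w \<in> G_group_carrier"
proof (induction w)
  case Nil then show ?case using Gs.one_closed by (simp add: id_def)
next
  case (Cons g gs)
  have "wact (g#gs) = gf g \<otimes>\<^bsub>P\<^esub> wact gs" by (rule ext) simp
  then show ?case using Cons gf_in_G[of g] by (simp only: Gs.m_closed)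
qed




abbreviation finv :: "(word \<Rightarrow> word) \<Rightarrow> word \<Rightarrow> word" where "finv f \<equiv> inv_into UNIV f"

definition xw :: "gen list" where "xw = [Gb,Gb,Gb,Gci]"
definition yw :: "gen list" where "yw = [Gci,Gb,Gb,Gb]"
abbreviation Xf where "Xf \<equiv> wact xw"
abbreviation Yf where "Yf \<equiv> wact yw"

fun sx :: "letter \<Rightarrow> gen list" where
  "sx L1 = xw" | "sx L2 = [Gbi,Gc,Gbi]" | "sx L3 = yw" | "sx L4 = [Gbi]"
| "sx L5 = [Gci,Gbi,Gbi,Gci]" | "sx L6 = [Gbi]"
fun sy :: "letter \<Rightarrow> gen list" where
  "sy L1 = yw" | "sy L2 = xw" | "sy L3 = [Gbi,Gc,Gbi]" | "sy L4 = [Gbi]"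
| "sy L5 = [Gbi]" | "sy L6 = [Gci,Gbi,Gbi,Gci]"

lemma wact_Cons_red: "fst (wstep w x) = y \<Longrightarrow> red (snd (wstep w x)) = s \<Longrightarrow> wact w (x#v) = y # wact s v"
  by (metis wact_Cons wact_red)

lemma wact_comp: "wact (u @ w) = wact w \<circ> wact u"
  by (rule ext) (simp add: wact_append)

lemma X2: "Xf (Xf (l#v)) = l # wact (sx l) v"
proof -
  have "Xf (Xf (l#v)) = wact (xw@xw) (l#v)" by (simp add: wact_append)
  also have "\<dots> = l # wact (sx l) v"
    by (rule wact_Cons_red; cases l) (simp_all add: xw_def yw_def)
  finally show ?thesis .
qed

lemma Y2: "Yf (Yf (l#v)) = l # wact (sy l) v"
proof -
  have "Yf (Yf (l#v)) = wact (yw@yw) (l#v)" by (simp add: wact_append)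
  also have "\<dots> = l # wact (sy l) v"
    by (rule wact_Cons_red; cases l) (simp_all add: xw_def yw_def)
  finally show ?thesis .
qed

lemma sec_pow: "(\<And>v. F (l#v) = l # S v) \<Longrightarrow> (F^^m) (l#v) = l # (S^^m) v"
  by (induction m arbitrary: v) auto

lemma X_pow2: "(Xf^^(2*m)) (l#v) = l # (wact (sx l) ^^ m) v"
proof -
  have "Xf^^(2*m) = (Xf^^2)^^m" by (simp add: funpow_mult)
  moreover have "(Xf^^2) (l#v) = l # wact (sx l) v" for v by (simp add: X2 numeral_2_eq_2)
  ultimately show ?thesis using sec_pow[of "Xf^^2" l] by metis
qed

lemma Y_pow2: "(Yf^^(2*m)) (l#v) = l # (wact (sy l) ^^ m) v"
proof -
  have "Yf^^(2*m) = (Yf^^2)^^m" by (simp add: funpow_mult)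
  moreover have "(Yf^^2) (l#v) = l # wact (sy l) v" for v by (simp add: Y2 numeral_2_eq_2)
  ultimately show ?thesis using sec_pow[of "Yf^^2" l] by metis
qed

lemma wact_Nil_fun: "wact [] = id" by (rule ext) simp

lemma wact_rep: "wact (concat (replicate n w)) = wact w ^^ n"
proof (induction n)
  case 0 then show ?case by (simp add: wact_Nil_fun)
next
  case (Suc n)
  have "wact (concat (replicate (Suc n) w)) = wact (concat (replicate n w)) \<circ> wact w"
    by (simp add: wact_comp)
  then show ?case using Suc by (simp only: funpow_Suc_right)
qed

lemma fin1: "wact [Gbi,Gc,Gbi] ^^ 9 = id"
proof -
  have c: "list_all (okpair [([Gbi, Gc, Gbi, Gbi, Gc, Gbi, Gbi, Gc, Gbi, Gbi, Gc, Gbi, Gbi, Gc, Gbi, Gbi, Gc, Gbi, Gbi, Gc, Gbi, Gbi, Gc, Gbi, Gbi, Gc, Gbi], []), ([Gbi, Gc, Gbi, Gbi, Gc, Gbi, Gbi, Gc, Gbi, Gbi, Gc, Gbi, Gbi, Gc, Gbi, Gbi, Gc, Gbi, Gbi, Gc, Gbi, Gbi, Gc, Gbi, Gbi, Gc, Gbi], []), ([Gc, Gb, Gb, Gc, Gb, Gb, Gc, Gb, Gb], []), ([], []), ([Gci, Gb, Gb, Gc, Gb, Gb, Gc, Gb, Gb, Gci], []), ([Gci, Gbi, Gbi, Gci, Gbi, Gbi, Gci, Gbi, Gbi], []), ([Gb, Gb, Gc, Gb, Gb, Gc, Gb, Gb, Gc], []), ([Gbi, Gci, Gbi, Gbi,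 Gci, Gbi, Gbi, Gci, Gbi], []), ([Gbi, Gbi, Gci, Gbi, Gbi, Gci, Gbi, Gbi, Gci], [])]) [([Gbi, Gc, Gbi, Gbi, Gc, Gbi, Gbi, Gc, Gbi, Gbi, Gc, Gbi, Gbi, Gc, Gbi, Gbi, Gc, Gbi, Gbi, Gc, Gbi, Gbi, Gc, Gbi, Gbi, Gc, Gbi], []), ([Gbi, Gc, Gbi, Gbi, Gc, Gbi, Gbi, Gc, Gbi, Gbi, Gc, Gbi, Gbi, Gc, Gbi, Gbi, Gc, Gbi, Gbi, Gc, Gbi, Gbi, Gc, Gbi, Gbi, Gc, Gbi], []), ([Gc, Gb, Gb, Gc, Gb, Gb, Gc, Gb, Gb], []), ([], []), ([Gci, Gb, Gb, Gc, Gb, Gb, Gc, Gb, Gb, Gci], []), ([Gci, Gbi, Gbi, Gci, Gbi, Gbi, Gci, Gbi, Gbi], []), ([Gb, Gb, Gc, Gb, Gb, Gc, Gb, Gb, Gc], []), ([Gbi, Gci, Gbi, Gbi, Gci, Gbi, Gbi, Gci, Gbi], []), ([Gbi, Gbi, Gci, Gbi, Gbi, Gci, Gbi, Gbi, Gci], [])]" by code_simp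
  have "wact (concat (replicate 9 [Gbi,Gc,Gbi])) v = wact [] v" for v
    by (rule bisim_sound[OF c]) code_simp
  then show ?thesis by (simp only: wact_rep fun_eq_iff) simp
qed

lemma fin2: "wact [Gci,Gbi,Gbi,Gci] ^^ 9 = id"
proof -
  have c: "list_all (okpair [([Gci, Gbi, Gbi, Gci, Gci, Gbi, Gbi, Gci, Gci, Gbi, Gbi, Gci, Gci, Gbi, Gbi, Gci, Gci, Gbi, Gbi, Gci, Gci, Gbi, Gbi, Gci, Gci, Gbi, Gbi, Gci, Gci, Gbi, Gbi, Gci, Gci, Gbi, Gbi, Gci], []), ([Gci, Gbi, Gbi, Gc, Gbi, Gbi, Gc, Gbi, Gbi, Gc, Gbi, Gbi, Gc, Gbi, Gbi, Gc, Gbi, Gbi, Gc, Gbi, Gbi, Gc, Gbi, Gbi, Gc, Gbi, Gbi, Gci], []), ([Gc, Gb, Gb, Gc, Gb, Gb, Gc, Gb, Gb], []), ([Gc, Gbi, Gbi, Gci, Gbi, Gbi, Gci, Gbi, Gbi, Gc], []), ([Gbi, Gbi, Gci, Gbi, Gbi, Gci, Gbi, Gbi, Gci], []), ([], []), ([Gci, Gbi, Gbi, Gci, Gbi, Gbi, Gci, Gbi, Gbi], []), ([Gb, Gb, Gc, Gb, Gb, Gc, Gb, Gb, Gc], []), ([Gb, Gc, Gb, Gb, Gc, Gb, Gb, Gc, Gb], [])]) [([Gci, Gbi, Gbi, Gci, Gci, Gbi, Gbi, Gci, Gci, Gbi, Gbi, Gci, Gci, Gbi, Gbi, Gci, Gci,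 Gbi, Gbi, Gci, Gci, Gbi, Gbi, Gci, Gci, Gbi, Gbi, Gci, Gci, Gbi, Gbi, Gci, Gci, Gbi, Gbi, Gci], []), ([Gci, Gbi, Gbi, Gc, Gbi, Gbi, Gc, Gbi, Gbi, Gc, Gbi, Gbi, Gc, Gbi, Gbi, Gc, Gbi, Gbi, Gc, Gbi, Gbi, Gc, Gbi, Gbi, Gc, Gbi, Gbi, Gci], []), ([Gc, Gb, Gb, Gc, Gb, Gb, Gc, Gb, Gb], []), ([Gc, Gbi, Gbi, Gci, Gbi, Gbi, Gci, Gbi, Gbi, Gc], []), ([Gbi, Gbi, Gci, Gbi, Gbi, Gci, Gbi, Gbi, Gci], []), ([], []), ([Gci, Gbi, Gbi, Gci, Gbi, Gbi, Gci, Gbi, Gbi], []), ([Gb, Gb, Gc, Gb, Gb, Gc, Gb, Gb, Gc], []), ([Gb, Gc, Gb, Gb, Gc, Gb, Gb, Gc, Gb], [])]" by code_simp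
  have "wact (concat (replicate 9 [Gci,Gbi,Gbi,Gci])) v = wact [] v" for v
    by (rule bisim_sound[OF c]) code_simp
  then show ?thesis by (simp only: wact_rep fun_eq_iff) simp
qed

lemma id_funpow: "(id::'a\<Rightarrow>'a) ^^ n = id" by (induction n) auto

lemma fin_pow: assumes "f ^^ 9 = id" "9 dvd p" shows "f ^^ p = id"
proof -
  obtain q where "p = 9 * q" using assms(2) by (auto simp: dvd_def)
  then have "f ^^ p = (f ^^ 9) ^^ q" by (simp add: funpow_mult)
  then show ?thesis using assms(1) by (simp add: id_funpow)
qed

lemma bij_pow: fixes f :: "word \<Rightarrow> word" assumes "bij f" shows "bij (f^^n)"
proof -
  have "f [^]\<^bsub>P\<^esub> n \<in> carrier P" using assms by (intro P.nat_pow_closed) simp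
  then show ?thesis by (simp add: P_pow)
qed




fun ginv :: "gen \<Rightarrow> gen" where
  "ginv Gb = Gbi" | "ginv Gbi = Gb" | "ginv Gc = Gci" | "ginv Gci = Gc"

definition invw :: "gen list \<Rightarrow> gen list" where "invw w = rev (map ginv w)"

lemma gf_ginv: "gf (ginv g) (gf g v) = v" "gf g (gf (ginv g) v) = v"
  by (cases g; simp add: aut_b_inverses)+

lemma wact_invw: "wact (invw w) (wact w v) = v"
  by (induction w arbitrary: v) (simp_all add: invw_def wact_append gf_ginv)

lemma wact_invw2: "wact w (wact (invw w) v) = v"
  by (induction w arbitrary: v) (simp_all add: invw_def wact_append gf_ginv)

lemma finv_wact: "finv (wact w) = wact (invw w)"
  by (rule inv_equality) (simp_all add: wact_invw wact_invw2)

definition comm :: "(word \<Rightarrow> word) \<Rightarrow> (word \<Rightarrow> word) \<Rightarrow> word \<Rightarrow> word" where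
  "comm f g = finv g \<circ> finv f \<circ> g \<circ> f"

lemma inv_sec:
  assumes "bij f" "bij f'" "\<And>v. f (l#v) = l # f' v"
  shows "finv f (l#v) = l # finv f' v"
proof -
  have "f' (finv f' v) = v" using assms(2) by (simp add: bij_is_surj surj_f_inv_f)
  then have "f (l # finv f' v) = l # v" using assms(3) by simp
  then have "finv f (l#v) = finv f (f (l # finv f' v))" by simp
  also have "\<dots> = l # finv f' v" using assms(1) by (simp add: bij_is_inj inv_f_f)
  finally show ?thesis .
qed

lemma comm_sec:
  assumes "bij f" "bij f'" "\<And>v. f (l#v) = l # f' v"
    and "bij g" "bij g'" "\<And>v. g (l#v) = l # g' v"
  shows "comm f g (l#v) = l # comm f' g' v"
  using assms inv_sec[OF assms(1-3)] inv_sec[OF assms(4-6)] by (simp add: comm_def)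

lemma comm_id1: "bij g \<Longrightarrow> comm id g = id"
  by (simp add: comm_def inv_id bij_is_inj inv_o_cancel)

lemma comm_id2: "bij f \<Longrightarrow> comm f id = id"
  by (simp add: comm_def inv_id bij_is_inj inv_o_cancel)

lemma comm_self: "bij f \<Longrightarrow> comm f f = id"
  by (simp add: comm_def bij_is_inj inv_o_cancel fun_eq_iff)

lemma finv_Nil: "bij f \<Longrightarrow> f [] = [] \<Longrightarrow> finv f [] = []"
  by (metis bij_is_inj inv_f_f)

lemma comm_Nil: "bij f \<Longrightarrow> bij g \<Longrightarrow> f [] = [] \<Longrightarrow> g [] = [] \<Longrightarrow> comm f g [] = []"
  by (simp add: comm_def finv_Nil)

lemma wact_pow_Nil: "(wact w ^^ n) [] = []"
  by (induction n) auto

definition Dj :: "nat \<Rightarrow> word \<Rightarrow> word" where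
  "Dj j = comm (Xf^^(9*2^j)) (Yf^^(9*2^j))"

definition dl :: "word \<Rightarrow> (word \<Rightarrow> word) \<Rightarrow> word \<Rightarrow> word" where
  "dl v F w = (if take (length v) w = v then v @ F (drop (length v) w) else w)"

lemma dl_app: "dl v F (v @ u) = v @ F u" by (simp add: dl_def)

lemma dl_Nil: "dl [] F = F" by (rule ext) (simp add: dl_def)

lemma dl_Cons: "dl (a#v) F = dl [a] (dl v F)"
proof (rule ext)
  fix w show "dl (a#v) F w = dl [a] (dl v F) w"
    by (cases w) (auto simp: dl_def)
qed

lemma dl_other: "take (length v) w \<noteq> v \<Longrightarrow> dl v F w = w" by (simp add: dl_def)

lemma bij_Xp: "bij (Xf^^n)" "bij (Yf^^n)" "bij (wact w ^^ n)"
  by (simp_all add: bij_pow bij_wact)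

lemma Dj_Suc: "Dj (Suc j) = dl [L1] (Dj j)"
proof (rule ext)
  fix w
  define p :: nat where "p = 9 * 2^j"
  have p2: "(9::nat) * 2 ^ Suc j = 2 * p" by (simp add: p_def)
  have d9: "9 dvd p" by (simp add: p_def)
  show "Dj (Suc j) w = dl [L1] (Dj j) w"
  proof (cases w)
    case Nil
    then show ?thesis
      by (simp add: Dj_def dl_def comm_Nil bij_Xp wact_pow_Nil)
  next
    case (Cons l v)
    have "Dj (Suc j) (l#v) = l # comm (wact (sx l) ^^ p) (wact (sy l) ^^ p) v"
      unfolding Dj_def p2
      by (rule comm_sec) (simp_all add: bij_Xp X_pow2 Y_pow2)
    also have "\<dots> = dl [L1] (Dj j) (l#v)"
    proof (cases l)
      case L1 then show ?thesis using dl_app[of "[L1]" "Dj j" v] by (simp add: Dj_def p_def)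
    next
      case L2 then show ?thesis
        by (simp add: fin_pow[OF fin1 d9] comm_id1 bij_Xp dl_def)
    next
      case L3 then show ?thesis
        by (simp add: fin_pow[OF fin1 d9] comm_id2 bij_Xp dl_def)
    next
      case L4 then show ?thesis
        by (simp add: comm_self bij_Xp dl_def)
    next
      case L5 then show ?thesis
        by (simp add: fin_pow[OF fin2 d9] comm_id1 bij_Xp dl_def)
    next
      case L6 then show ?thesis
        by (simp add: fin_pow[OF fin2 d9] comm_id2 bij_Xp dl_def)
    qed
    finally show ?thesis using Cons by simp
  qed
qed

lemma Dj_form: "Dj j = dl (replicate j L1) (Dj 0)"
  by (induction j) (simp_all add: dl_Nil Dj_Suc flip: dl_Cons)

definition X9 where "X9 = concat (replicate 9 xw)"
definition Y9 where "Y9 = concat (replicate 9 yw)"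
definition Kw where "Kw = X9 @ Y9 @ invw X9 @ invw Y9"

lemma comm_wact: "comm (wact A) (wact B) = wact (A @ B @ invw A @ invw B)"
  by (simp add: comm_def finv_wact wact_comp comp_assoc)

lemma Dj0: "Dj 0 = wact Kw"
  by (simp add: Dj_def Kw_def X9_def Y9_def comm_wact flip: wact_rep)

lemma Dj_in_G: "Dj j \<in> G_group_carrier"
  by (simp add: Dj_def comm_wact wact_in_G flip: wact_rep)



definition h0 :: "gen list" where "h0 = [Gb, Gb, Gb, Gci, Gb, Gb, Gb, Gci, Gb, Gb, Gb, Gci, Gb, Gb, Gb, Gci, Gb, Gb, Gb, Gci, Gb, Gb, Gb, Gci, Gb, Gb, Gb, Gci, Gb, Gb, Gb, Gci, Gb, Gb, Gb, Gc, Gb, Gb, Gb, Gci, Gb, Gb, Gb, Gci, Gb, Gb, Gb, Gci, Gb, Gb, Gb, Gci, Gb, Gb, Gb, Gci, Gb, Gb, Gb, Gci, Gb, Gb, Gb, Gci, Gb, Gb, Gb, Gci, Gb, Gb, Gb, Gc, Gbi, Gbi, Gbi, Gc, Gbi, Gbi, Gbi, Gc, Gbi, Gbi, Gbi, Gc, Gbi, Gbi, Gbi, Gc, Gbi, Gbi, Gbi, Gc, Gbi, Gbi, Gbi, Gc, Gbi, Gbi, Gbi, Gc, Gbi, Gbi, Gbi, Gc, Gbi, Gbi, Gbi, Gbi, Gbi, Gbi, Gc, Gbi, Gbi, Gbi, Gc, Gbi, Gbi, Gbi, Gc, Gbi, Gbi, Gbi, Gc, Gbi, Gbi, Gbi,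 Gc, Gbi, Gbi, Gbi, Gc, Gbi, Gbi, Gbi, Gc, Gbi, Gbi, Gbi, Gc, Gbi, Gbi, Gbi, Gc]"

definition h1 :: "gen list" where "h1 = [Gb, Gb, Gb, Gci, Gb, Gb, Gb, Gci, Gb, Gb, Gb, Gci, Gb, Gb, Gb, Gci, Gb, Gb, Gc, Gbi, Gbi, Gc, Gbi, Gbi, Gc, Gbi, Gbi, Gc, Gbi, Gbi, Gci, Gb, Gb, Gb, Gb, Gb, Gb, Gb, Gb, Gci, Gbi, Gbi, Gc, Gbi, Gbi, Gc, Gbi, Gbi, Gc, Gbi, Gbi, Gc, Gb, Gb, Gci, Gb, Gb, Gb, Gci, Gb, Gb, Gb, Gci, Gb, Gb, Gb, Gci, Gb, Gb, Gb, Gc, Gbi, Gbi, Gbi, Gc, Gbi, Gbi, Gbi, Gc, Gbi, Gbi, Gbi, Gc, Gbi, Gbi, Gbi, Gc, Gb, Gci, Gb, Gb, Gci, Gb, Gb, Gci, Gb, Gb, Gci, Gb, Gb, Gc, Gbi, Gbi, Gbi, Gbi, Gbi, Gbi, Gbi, Gbi, Gbi, Gbi, Gc, Gb, Gb, Gci, Gb, Gb, Gci, Gb, Gb, Gci, Gb, Gb, Gci, Gb, Gc, Gbi, Gbi, Gbi, Gc, Gbi, Gbi, Gbi, Gc, Gbi, Gbi, Gbi, Gc, Gbi, Gbi, Gbi, Gc]"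

definition h2 :: "gen list" where "h2 = [Gci, Gb, Gb, Gb, Gci, Gb, Gb, Gb, Gb, Gb, Gc, Gbi, Gci, Gbi, Gci, Gb, Gb, Gc, Gb, Gc, Gbi, Gbi, Gc, Gbi, Gbi, Gci, Gb, Gb, Gc, Gbi, Gbi, Gci, Gbi, Gbi, Gbi, Gbi, Gbi, Gbi, Gbi, Gbi, Gbi, Gbi, Gbi, Gbi, Gci, Gbi, Gbi, Gc, Gb, Gb, Gci, Gbi, Gbi, Gc, Gbi, Gbi, Gc, Gb, Gc, Gb, Gb, Gci, Gbi, Gci, Gbi, Gc, Gb, Gb, Gb, Gb, Gb, Gci, Gb, Gb, Gb, Gci, Gb, Gci, Gb, Gb, Gci, Gb, Gci, Gbi, Gbi, Gci, Gb, Gc, Gb, Gc, Gb, Gc, Gb, Gb, Gb, Gb, Gc, Gb, Gb, Gb, Gb, Gb, Gb, Gb, Gb, Gb, Gb, Gc, Gb, Gb, Gb, Gb, Gc, Gb, Gc, Gb, Gc, Gb, Gci, Gbi, Gbi, Gci, Gb, Gci, Gb, Gb, Gci, Gb]"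

definition h3 :: "gen list" where "h3 = [Gci, Gb, Gb, Gb, Gb, Gb, Gc, Gbi, Gbi, Gc, Gb, Gc, Gb, Gci, Gbi, Gci, Gbi, Gci, Gb, Gb, Gb, Gci, Gbi, Gbi, Gbi, Gci, Gbi, Gbi, Gbi, Gci, Gb, Gb, Gb, Gci, Gbi, Gci, Gbi, Gci, Gb, Gc, Gb, Gc, Gbi, Gbi, Gc, Gb, Gb, Gb, Gb, Gb, Gci, Gb, Gc, Gb, Gc, Gbi, Gci, Gbi, Gc, Gbi, Gbi, Gbi, Gbi, Gbi, Gbi, Gbi, Gbi, Gbi, Gbi, Gbi, Gbi, Gbi, Gbi, Gc, Gbi, Gci, Gbi, Gc, Gb, Gc, Gb]"

definition h4 :: "gen list" where "h4 = [Gci, Gbi, Gc, Gbi, Gci, Gb, Gb, Gci, Gbi, Gc, Gbi, Gci, Gb, Gc, Gb, Gc, Gb, Gc, Gb, Gci, Gb, Gb, Gb, Gb, Gb, Gc, Gbi, Gbi, Gci, Gbi, Gbi, Gc, Gb, Gb, Gb, Gb, Gb, Gci, Gb, Gc, Gb, Gc, Gb, Gc, Gb]"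

definition h5 :: "gen list" where "h5 = [Gb, Gb, Gb, Gb, Gb, Gci, Gbi, Gbi, Gc, Gbi, Gc, Gbi, Gci, Gbi, Gc, Gbi, Gc, Gbi, Gbi, Gci, Gbi]"

definition h6 :: "gen list" where "h6 = [Gci, Gbi, Gci, Gb, Gb, Gci]"

lemma red_Kw: "red Kw = h0" unfolding Kw_def X9_def Y9_def xw_def yw_def h0_def by code_simp

lemma st0: "fst (wstep (concat (replicate 3 h0)) L1) = L1 \<and> red (snd (wstep (concat (replicate 3 h0)) L1)) = h1"
  unfolding h0_def h1_def by code_simp

lemma st1: "fst (wstep (concat (replicate 3 h1)) L3) = L3 \<and> red (snd (wstep (concat (replicate 3 h1)) L3)) = h2"
  unfolding h1_def h2_def by code_simp

lemma st2: "fst (wstep (concat (replicate 3 h2)) L1) = L1 \<and> red (snd (wstep (concat (replicate 3 h2)) L1)) = h3"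
  unfolding h2_def h3_def by code_simp

lemma st3: "fst (wstep (concat (replicate 3 h3)) L1) = L1 \<and> red (snd (wstep (concat (replicate 3 h3)) L1)) = h4"
  unfolding h3_def h4_def by code_simp

lemma st4: "fst (wstep (concat (replicate 3 h4)) L1) = L1 \<and> red (snd (wstep (concat (replicate 3 h4)) L1)) = h5"
  unfolding h4_def h5_def by code_simp

lemma st5: "fst (wstep (concat (replicate 1 h5)) L5) = L5 \<and> red (snd (wstep (concat (replicate 1 h5)) L5)) = h6"
  unfolding h5_def h6_def by code_simp

lemma h6_X: "wact h6 = Xf"
proof -
  have c: "list_all (okpair [([Gci, Gbi, Gci, Gb, Gb, Gci], [Gb, Gb, Gb, Gci]), ([Gbi, Gci], [Gbi, Gci]), ([], []), ([Gci], [Gci]), ([Gb, Gb, Gb], [Gb, Gb, Gb]), ([Gbi], [Gbi]), ([Gc], [Gc]), ([Gb], [Gb]), ([Gci, Gbi], [Gci, Gbi])]) [([Gci, Gbi, Gci, Gb, Gb, Gci], [Gb, Gb, Gb, Gci]), ([Gbi, Gci], [Gbi, Gci]), ([], []), ([Gci], [Gci]), ([Gb, Gb, Gb], [Gb, Gb, Gb]), ([Gbi], [Gbi]), ([Gc], [Gc]), ([Gb], [Gb]), ([Gci, Gbi], [Gci, Gbi])]" by code_simp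
  have "wact h6 v = wact xw v" for v by (rule bisim_sound[OF c]) (simp add: h6_def xw_def)
  then show ?thesis by (simp add: fun_eq_iff)
qed

lemma chain_step:
  assumes "fst (wstep (concat (replicate k h)) l) = l \<and> red (snd (wstep (concat (replicate k h)) l)) = s"
  shows "(wact h ^^ (k*m)) (l#v) = l # (wact s ^^ m) v"
proof -
  have "wact h ^^ (k*m) = (wact h ^^ k) ^^ m" by (simp add: funpow_mult)
  also have "\<dots> = wact (concat (replicate k h)) ^^ m" by (simp add: wact_rep)
  finally have e: "wact h ^^ (k*m) = wact (concat (replicate k h)) ^^ m" .
  have "wact (concat (replicate k h)) (l#v') = l # wact s v'" for v'
    using assms by (intro wact_Cons_red) auto
  then show ?thesis unfolding e by (rule sec_pow)
qed

lemma K_path: "(wact Kw ^^ (243*m)) (L1#L3#L1#L1#L1#L5#v) = L1#L3#L1#L1#L1#L5# (Xf^^m) v"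
proof -
  have k: "wact Kw = wact h0" by (rule ext) (simp only: red_Kw[symmetric] wact_red)
  have e: "(243::nat)*m = 3*(3*(3*(3*(3*(1*m)))))" by simp
  show ?thesis
    by (simp only: e k chain_step[OF st0] chain_step[OF st1] chain_step[OF st2] chain_step[OF st3]
        chain_step[OF st4] chain_step[OF st5] h6_X)
qed

lemma X_L1: "Xf (L1#v) = L3 # wact [Gb,Gb,Gb] v"
  by (rule wact_Cons_red) (simp_all add: xw_def)

lemma X_inf: "Xf^^m = id \<Longrightarrow> m = 0"
proof (induction m rule: less_induct)
  case (less m)
  show ?case
  proof (rule ccontr)
    assume m0: "m \<noteq> 0"
    show False
    proof (cases "even m")
      case True
      then obtain q where q: "m = 2*q" by auto
      have "L1 # (Xf^^q) v = L1 # v" for v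
      proof -
        have "L1 # (Xf^^q) v = (Xf^^(2*q)) (L1 # v)" using X_pow2[of q L1 v] by (simp only: sx.simps)
        also have "\<dots> = L1 # v" using less.prems q by (simp only: id_apply)
        finally show ?thesis .
      qed
      then have "Xf^^q = id" by (simp add: fun_eq_iff)
      then have "q = 0" using less.IH[of q] q m0 by simp
      then show False using q m0 by simp
    next
      case False
      define q where "q = m div 2"
      have q: "m = Suc (2*q)" using False unfolding q_def by presburger
      have "(Xf^^m) [L1] = Xf ((Xf^^(2*q)) [L1])" by (simp only: q funpow.simps comp_apply)
      also have "(Xf^^(2*q)) [L1] = [L1]" using X_pow2[of q L1 "[]"] by (simp only: wact_pow_Nil)
      also have "Xf [L1] = [L3]" by (simp only: X_L1 wact_Nil)
      finally show False using less.prems by simp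
    qed
  qed
qed

lemma K_inf: "wact Kw ^^ m = id \<Longrightarrow> m = 0"
proof -
  assume a: "wact Kw ^^ m = id"
  have "wact Kw ^^ (m*243) = (wact Kw ^^ m) ^^ 243" by (simp only: funpow_mult)
  also have "\<dots> = id" by (simp only: a id_funpow)
  finally have "wact Kw ^^ (243*m) = id" by (simp only: mult.commute)
  then have "(Xf^^m) v = v" for v using K_path[of m v] by simp
  then show "m = 0" using X_inf by (simp add: fun_eq_iff)
qed




definition B3w :: "gen list" where "B3w = [Gb,Gb,Gb]"
abbreviation B3 where "B3 \<equiv> wact B3w"
abbreviation Kf where "Kf \<equiv> wact Kw"
definition Kp :: "word \<Rightarrow> word" where "Kp = B3 \<circ> Kf \<circ> finv B3"
definition Qj :: "nat \<Rightarrow> word \<Rightarrow> word" where "Qj j = Xf^^(2^j)"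
definition Ej :: "nat \<Rightarrow> word \<Rightarrow> word" where "Ej j = Qj j \<circ> Dj (Suc j) \<circ> finv (Qj j)"

lemma bij_Qj: "bij (Qj j)" by (simp add: Qj_def bij_Xp)

lemma bij_Kp: "bij Kp"
  by (simp add: Kp_def bij_wact bij_comp bij_imp_bij_inv)

lemma Q_pref: "Qj j (replicate j L1 @ v) = replicate j L1 @ Xf v"
proof (induction j arbitrary: v)
  case 0 then show ?case by (simp add: Qj_def)
next
  case (Suc j)
  have "Qj (Suc j) (replicate (Suc j) L1 @ v) = (Xf^^(2*2^j)) (L1 # (replicate j L1 @ v))"
    by (simp add: Qj_def)
  also have "\<dots> = L1 # Qj j (replicate j L1 @ v)"
    using X_pow2[of "2^j" L1] by (simp add: Qj_def)
  finally show ?case using Suc by simp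
qed

lemma finv_app: "bij f \<Longrightarrow> f u = w \<Longrightarrow> finv f w = u"
  by (metis bij_is_inj inv_f_f)

lemma finv_f: "bij f \<Longrightarrow> f (finv f w) = w"
  by (simp add: bij_is_surj surj_f_inv_f)

lemma Qinv_pref: "finv (Qj j) (replicate j L1 @ v) = replicate j L1 @ finv Xf v"
  by (rule finv_app[OF bij_Qj]) (simp add: Q_pref finv_f bij_wact)

lemma take_pre: "take j w = replicate j L1 \<Longrightarrow> w = replicate j L1 @ drop j w"
  by (metis append_take_drop_id)

lemma Qinv_nopref:
  assumes "take j w \<noteq> replicate j L1" shows "take j (finv (Qj j) w) \<noteq> replicate j L1"
proof
  assume a: "take j (finv (Qj j) w) = replicate j L1"
  have "w = Qj j (finv (Qj j) w)" by (simp add: finv_f bij_Qj)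
  also have "\<dots> = Qj j (replicate j L1 @ drop j (finv (Qj j) w))" using take_pre[OF a] by simp
  also have "\<dots> = replicate j L1 @ Xf (drop j (finv (Qj j) w))" by (simp add: Q_pref)
  finally have w: "w = replicate j L1 @ Xf (drop j (finv (Qj j) w))" .
  have "take j w = replicate j L1" by (subst w) simp
  then show False using assms by simp
qed

lemma Xinv_L3: "finv Xf (L3 # u) = L1 # finv B3 u"
proof (rule finv_app[OF bij_wact])
  show "Xf (L1 # finv B3 u) = L3 # u"
    by (simp only: X_L1 B3w_def[symmetric] finv_f[OF bij_wact])
qed

lemma Xinv_notL3: "take 1 r \<noteq> [L3] \<Longrightarrow> take 1 (finv Xf r) \<noteq> [L1]"
proof
  assume a: "take 1 r \<noteq> [L3]" "take 1 (finv Xf r) = [L1]"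
  then obtain u where u: "finv Xf r = L1 # u" by (cases "finv Xf r") auto
  have "r = Xf (finv Xf r)" by (simp add: finv_f bij_wact)
  also have "\<dots> = L3 # wact [Gb,Gb,Gb] u" by (simp add: u X_L1)
  finally show False using a(1) by simp
qed

lemma take_Suc_pre: "take (Suc j) w = replicate j L1 @ [a] \<Longrightarrow> take j w = replicate j L1"
proof -
  assume a: "take (Suc j) w = replicate j L1 @ [a]"
  have "take j w = take j (take (Suc j) w)" by simp
  also have "\<dots> = replicate j L1" by (simp add: a)
  finally show ?thesis .
qed

lemma Ej_form: "Ej j = dl (replicate j L1 @ [L3]) Kp"
proof (rule ext)
  fix w
  define pre where "pre = replicate j L1"
  have lp: "length pre = j" by (simp add: pre_def)
  have D: "Dj (Suc j) = dl (pre @ [L1]) Kf"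
  proof -
    have "replicate (Suc j) L1 = pre @ [L1]" by (simp add: pre_def replicate_append_same)
    then show ?thesis by (simp only: Dj_form[of "Suc j"] Dj0)
  qed
  show "Ej j w = dl (replicate j L1 @ [L3]) Kp w"
  proof (cases "take j w = pre")
    case True
    define r where "r = drop j w"
    have w: "w = pre @ r" using True by (simp add: r_def take_pre pre_def)
    show ?thesis
    proof (cases "take 1 r = [L3]")
      case True
      then obtain r' where r: "r = L3 # r'" by (cases r) auto
      have "finv (Qj j) w = (pre @ [L1]) @ finv B3 r'"
        by (simp add: w r pre_def Qinv_pref Xinv_L3)
      then have "Ej j w = Qj j ((pre @ [L1]) @ Kf (finv B3 r'))"
        by (simp only: Ej_def D comp_apply dl_app)
      also have "\<dots> = pre @ L3 # B3 (Kf (finv B3 r'))"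
        by (simp add: pre_def Q_pref X_L1 B3w_def)
      also have "\<dots> = dl (replicate j L1 @ [L3]) Kp w"
        using dl_app[of "pre @ [L3]" Kp r'] by (simp add: w r pre_def Kp_def)
      finally show ?thesis .
    next
      case False
      have q: "finv (Qj j) w = pre @ finv Xf r" by (simp add: w pre_def Qinv_pref)
      have "take (length (pre @ [L1])) (pre @ finv Xf r) \<noteq> pre @ [L1]"
        using Xinv_notL3[OF False] by (simp add: lp)
      then have "Ej j w = Qj j (pre @ finv Xf r)"
        by (simp add: Ej_def D q dl_other)
      also have "\<dots> = w" by (simp add: pre_def Q_pref finv_f bij_wact w)
      also have "w = dl (replicate j L1 @ [L3]) Kp w"
        using False by (intro dl_other[symmetric]) (simp add: w lp flip: pre_def)
      finally show ?thesis .
    qed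
  next
    case False
    have "take j (finv (Qj j) w) \<noteq> pre" using Qinv_nopref False by (simp add: pre_def)
    then have "take (length (pre @ [L1])) (finv (Qj j) w) \<noteq> pre @ [L1]"
      using take_Suc_pre[of j "finv (Qj j) w" L1] by (auto simp: lp pre_def)
    then have "Ej j w = w" by (simp add: Ej_def D dl_other finv_f bij_Qj)
    also have "w = dl (replicate j L1 @ [L3]) Kp w"
      using False take_Suc_pre[of j w L3] by (intro dl_other[symmetric]) (auto simp: pre_def)
    finally show ?thesis .
  qed
qed

lemma Qj_in_G: "Qj j \<in> G_group_carrier"
  by (simp add: Qj_def wact_in_G flip: wact_rep)

lemma Ej_in_G: "Ej j \<in> G_group_carrier"
proof -
  have "Ej j = (inv\<^bsub>P\<^esub> (Qj j) \<otimes>\<^bsub>P\<^esub> Dj (Suc j)) \<otimes>\<^bsub>P\<^esub> Qj j"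
    by (simp add: Ej_def P_inv bij_Qj comp_assoc)
  then show ?thesis by (simp only:) (intro Gs.m_closed Gs.m_inv_closed Qj_in_G Dj_in_G)
qed




lemma dl_comp: "dl v (f \<circ> g) = dl v f \<circ> dl v g"
proof (rule ext)
  fix w show "dl v (f \<circ> g) w = (dl v f \<circ> dl v g) w"
  proof (cases "take (length v) w = v")
    case True
    then have w: "w = v @ drop (length v) w" by (metis append_take_drop_id)
    show ?thesis by (subst (1 2) w) (simp only: dl_app comp_apply)
  next
    case False then show ?thesis by (simp add: dl_other)
  qed
qed

lemma dl_id: "dl v id = id"
  unfolding dl_def by (rule ext) (metis append_take_drop_id id_apply)

lemma bij_dl: assumes "bij f" shows "bij (dl v f)"
proof (rule o_bij[of "dl v (finv f)"])
  have "f \<circ> finv f = id" using assms bij_is_surj surj_iff by blast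
  then show "dl v f \<circ> dl v (finv f) = id" by (simp flip: dl_comp add: dl_id)
  have "finv f \<circ> f = id" using assms by (simp add: bij_is_inj inv_o_cancel)
  then show "dl v (finv f) \<circ> dl v f = id" by (simp flip: dl_comp add: dl_id)
qed

lemma dl_hom: "dl v \<in> hom P P"
  unfolding hom_def by (auto simp: bij_dl dl_comp)

interpretation dlh: group_hom P P "dl v"
  by (simp add: group_hom_def group_hom_axioms_def P_group dl_hom)

definition kp :: "int \<Rightarrow> word \<Rightarrow> word" where "kp z = Kp [^]\<^bsub>P\<^esub> z"

lemma Kp_carrier: "Kp \<in> carrier P" by (simp add: bij_Kp)

lemma bij_kp: "bij (kp z)"
  using P.int_pow_closed[OF Kp_carrier, of z] by (simp add: kp_def)

lemma kp_add: "kp (a + b) = kp b \<circ> kp a"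
  by (simp add: kp_def P.int_pow_mult[OF Kp_carrier])

lemma conj_pow: "bij B \<Longrightarrow> (B \<circ> F \<circ> finv B)^^m = B \<circ> F^^m \<circ> finv B"
proof (induction m)
  case 0
  have h: "B \<circ> finv B = id" using 0 bij_is_surj surj_iff by blast
  show ?case using h by (simp only: funpow.simps(1) comp_id)
next
  case (Suc m)
  have "(B \<circ> F \<circ> finv B)^^Suc m = (B \<circ> F \<circ> finv B) \<circ> (B \<circ> F^^m \<circ> finv B)"
    by (simp only: funpow.simps(2) Suc.IH[OF Suc.prems])
  also have "\<dots> = B \<circ> F^^Suc m \<circ> finv B"
    by (rule ext) (simp add: inv_f_f bij_is_inj Suc.prems)
  finally show ?case .
qed

lemma Kp_inf: "Kp^^m = id \<Longrightarrow> m = 0"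
proof -
  assume a: "Kp^^m = id"
  have bB: "bij B3" by (rule bij_wact)
  have "Kp^^m = B3 \<circ> Kf^^m \<circ> finv B3" unfolding Kp_def by (rule conj_pow[OF bB])
  then have e: "B3 ((Kf^^m) (finv B3 u)) = u" for u using a by (metis comp_apply id_apply)
  have "(Kf^^m) v = v" for v
  proof -
    have "(Kf^^m) v = (Kf^^m) (finv B3 (B3 v))" using bB by (simp add: inv_f_f bij_is_inj)
    also have "\<dots> = finv B3 (B3 ((Kf^^m) (finv B3 (B3 v))))" using bB by (simp add: inv_f_f bij_is_inj)
    also have "\<dots> = finv B3 (B3 v)" by (simp only: e)
    also have "\<dots> = v" using bB by (simp add: inv_f_f bij_is_inj)
    finally show ?thesis .
  qed
  then have "Kf^^m = id" by (simp add: fun_eq_iff)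
  then show "m = 0" by (rule K_inf)
qed

lemma kp_zero: "kp z = id \<Longrightarrow> z = 0"
proof (rule ccontr)
  assume a: "kp z = id" "z \<noteq> 0"
  have c: "Kp [^]\<^bsub>P\<^esub> nat (-z) \<in> carrier P"
    using Kp_carrier by (rule P.nat_pow_closed)
  show False
  proof (cases "z < 0")
    case True
    have "kp z = inv\<^bsub>P\<^esub> (Kp [^]\<^bsub>P\<^esub> nat (-z))"
      using True unfolding kp_def by (simp only: int_pow_def2 if_True)
    then have "inv\<^bsub>P\<^esub> (Kp [^]\<^bsub>P\<^esub> nat (-z)) = \<one>\<^bsub>P\<^esub>" using a(1) by simp
    then have "Kp [^]\<^bsub>P\<^esub> nat (-z) = \<one>\<^bsub>P\<^esub>" using P.inv_eq_1_iff[OF c] by blast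
    then have "Kp^^nat (-z) = id" by (simp only: P_pow P_one)
    then have "nat (-z) = 0" by (rule Kp_inf)
    then show False using True by simp
  next
    case False
    have "kp z = Kp [^]\<^bsub>P\<^esub> nat z"
      using False unfolding kp_def by (simp only: int_pow_def2 if_False)
    then have "Kp^^nat z = id" using a(1) by (simp only: P_pow)
    then have "nat z = 0" by (rule Kp_inf)
    then show False using False a(2) by simp
  qed
qed

lemma kp_inj: "kp a = kp b \<Longrightarrow> a = b"
proof -
  assume e: "kp a = kp b"
  have "kp (a - b) = kp (-b) \<circ> kp a" using kp_add[of a "-b"] by simp
  also have "\<dots> = kp (-b) \<circ> kp b" using e by simp
  also have "\<dots> = kp (b + -b)" using kp_add[of b "-b"] by simp
  also have "\<dots> = id" by (simp add: kp_def)
  finally have "a - b = 0" by (rule kp_zero)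
  then show "a = b" by simp
qed

lemma dl_kp: "dl (replicate n L1 @ [L3]) (kp z) = Ej n [^]\<^bsub>P\<^esub> z"
  using dlh.hom_int_pow[OF Kp_carrier, of "replicate n L1 @ [L3]" z] by (simp add: kp_def Ej_form)

lemma Ejpow_in_G: "Ej n [^]\<^bsub>P\<^esub> (z::int) \<in> G_group_carrier"
  by (rule P.subgroup_int_pow_closed[OF G_subgroup Ej_in_G])

fun PhiR :: "nat \<Rightarrow> (nat \<Rightarrow> int) \<Rightarrow> word \<Rightarrow> word" where
  "PhiR 0 k = id"
| "PhiR (Suc n) k = dl (replicate n L1 @ [L3]) (kp (k n)) \<circ> PhiR n k"

lemma form_uniq: "replicate j L1 @ L3 # r = replicate i L1 @ L3 # s \<Longrightarrow> j = i \<and> r = s"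
proof (induction j arbitrary: i)
  case 0 then show ?case by (cases i) auto
next
  case (Suc j) then show ?case by (cases i) auto
qed

lemma dl_form_same: "dl (replicate n L1 @ [L3]) F (replicate n L1 @ L3 # r) = replicate n L1 @ L3 # F r"
  using dl_app[of "replicate n L1 @ [L3]" F r] by simp

lemma dl_form_other:
  assumes "\<forall>r. w \<noteq> replicate n L1 @ L3 # r"
  shows "dl (replicate n L1 @ [L3]) F w = w"
proof (rule dl_other)
  show "take (length (replicate n L1 @ [L3])) w \<noteq> replicate n L1 @ [L3]"
  proof
    assume t: "take (length (replicate n L1 @ [L3])) w = replicate n L1 @ [L3]"
    then have t': "take (Suc n) w = replicate n L1 @ [L3]" by simp
    have "w = take (Suc n) w @ drop (Suc n) w" by (rule append_take_drop_id[symmetric])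
    then have "w = (replicate n L1 @ [L3]) @ drop (Suc n) w" by (simp only: t')
    then have "w = replicate n L1 @ L3 # drop (Suc n) w" by simp
    then show False using assms by blast
  qed
qed

lemma PhiR_other: "(\<forall>j<n. \<forall>r. w \<noteq> replicate j L1 @ L3 # r) \<Longrightarrow> PhiR n k w = w"
proof (induction n)
  case 0 then show ?case by simp
next
  case (Suc n)
  then have "PhiR n k w = w" by simp
  then show ?case using Suc.prems dl_form_other[of w n] by simp
qed

lemma PhiR_form: "j < n \<Longrightarrow> PhiR n k (replicate j L1 @ L3 # r) = replicate j L1 @ L3 # kp (k j) r"
proof (induction n)
  case 0 then show ?case by simp
next
  case (Suc n)
  show ?case
  proof (cases "j < n")
    case True
    have "\<forall>r'. replicate j L1 @ L3 # kp (k j) r \<noteq> replicate n L1 @ L3 # r'"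
      using form_uniq True by blast
    then show ?thesis using Suc.IH[OF True] dl_form_other by simp
  next
    case False
    then have jn: "j = n" using Suc.prems by simp
    have "PhiR n k (replicate j L1 @ L3 # r) = replicate j L1 @ L3 # r"
      by (rule PhiR_other) (use form_uniq jn in blast)
    then show ?thesis using jn dl_form_same by simp
  qed
qed

lemma PhiR_cong: "(\<And>j. j < n \<Longrightarrow> k j = l j) \<Longrightarrow> PhiR n k = PhiR n l"
  by (induction n) auto

lemma PhiR_in_G: "PhiR n k \<in> G_group_carrier"
proof (induction n)
  case 0
  have "PhiR 0 k = \<one>\<^bsub>P\<^esub>" by simp
  then show ?case using Gs.one_closed by (simp only:)
next
  case (Suc n)
  have "PhiR (Suc n) k = PhiR n k \<otimes>\<^bsub>P\<^esub> Ej n [^]\<^bsub>P\<^esub> k n"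
    by (simp add: dl_kp)
  then show ?case using Suc Ejpow_in_G by (simp only: Gs.m_closed)
qed

lemma PhiR_mult: "PhiR n (\<lambda>j. k j + l j) = PhiR n l \<circ> PhiR n k"
proof (rule ext)
  fix w
  show "PhiR n (\<lambda>j. k j + l j) w = (PhiR n l \<circ> PhiR n k) w"
  proof (cases "\<exists>j<n. \<exists>r. w = replicate j L1 @ L3 # r")
    case True
    then obtain j r where j: "j < n" and w: "w = replicate j L1 @ L3 # r" by blast
    show ?thesis using j by (simp add: w PhiR_form kp_add)
  next
    case False
    then show ?thesis by (simp add: PhiR_other)
  qed
qed

theorem corollary11p7:
  fixes n :: nat
  shows "\<exists>H. subgroup H word_perm_group \<and> H \<subseteq> G_group_carrier \<and>
           word_perm_group\<lparr>carrier := H\<rparr> \<cong> Zn_group n"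
proof -
  let ?Z = "Zn_group n"
  have gZ: "group ?Z" by (simp add: Zn_group_def)
  have carrZ: "carrier ?Z = (\<Pi>\<^sub>E i\<in>{..<n}. UNIV)" by (simp add: Zn_group_def)
  have multZ: "k \<otimes>\<^bsub>?Z\<^esub> l = (\<lambda>i\<in>{..<n}. k i + l i)" for k l by (simp add: Zn_group_def)
  define Ph where "Ph = (\<lambda>k. PhiR n k)"
  have Ph_mult: "Ph (k \<otimes>\<^bsub>?Z\<^esub> l) = Ph k \<otimes>\<^bsub>P\<^esub> Ph l" for k l
  proof -
    have "Ph (k \<otimes>\<^bsub>?Z\<^esub> l) = PhiR n (\<lambda>j. k j + l j)"
      unfolding Ph_def multZ by (rule PhiR_cong) simp
    then show ?thesis by (simp add: Ph_def PhiR_mult)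
  qed
  have PhG: "Ph k \<in> G_group_carrier" for k by (simp add: Ph_def PhiR_in_G)
  have hom: "Ph \<in> hom ?Z P"
    unfolding hom_def using PhG Gs.subset Ph_mult by auto
  interpret gh: group_hom ?Z P Ph
    by (simp add: group_hom_def group_hom_axioms_def gZ P_group hom)
  define H where "H = Ph ` carrier ?Z"
  have sub: "subgroup H P" unfolding H_def by (rule gh.img_is_subgroup)
  have HG: "H \<subseteq> G_group_carrier" unfolding H_def using PhG by blast
  have inj: "inj_on Ph (carrier ?Z)"
  proof (rule inj_onI)
    fix k l assume k: "k \<in> carrier ?Z" and l: "l \<in> carrier ?Z" and e: "Ph k = Ph l"
    show "k = l"
    proof (rule PiE_ext)
      show "k \<in> (\<Pi>\<^sub>E i\<in>{..<n}. (UNIV::int set))" "l \<in> (\<Pi>\<^sub>E i\<in>{..<n}. (UNIV::int set))"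
        using k l carrZ by auto
      fix j assume "j \<in> {..<n}"
      then have j: "j < n" by simp
      have "kp (k j) r = kp (l j) r" for r
        using PhiR_form[OF j, of k r] PhiR_form[OF j, of l r] e by (simp add: Ph_def)
      then show "k j = l j" by (intro kp_inj) (simp add: fun_eq_iff)
    qed
  qed
  have iso: "Ph \<in> iso ?Z (P\<lparr>carrier := H\<rparr>)"
  proof (rule isoI)
    show "Ph \<in> hom ?Z (P\<lparr>carrier := H\<rparr>)"
      unfolding hom_def using Ph_mult by (auto simp: H_def)
    show "bij_betw Ph (carrier ?Z) (carrier (P\<lparr>carrier := H\<rparr>))"
      using inj by (simp add: bij_betw_def H_def)
  qed
  then have "?Z \<cong> P\<lparr>carrier := H\<rparr>" by (rule is_isoI)
  then have "P\<lparr>carrier := H\<rparr> \<cong> ?Z" by (rule group.iso_sym[OF gZ])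
  then show ?thesis using sub HG by blast
qed


end
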